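(* Let $(k,|\cdot|)$ be a complete non-Archimedean field of characteristic $p>0$ with nontrivial value group. The following are equivalent: (i) $K_n(k)$ is Frobenius split for each integer $n>0$; (ii) $K_n(k)$ has a nonzero $p^{-1}$-linear map for each integer $n>0$; (iii) there exists an integer $n>0$ for which $K_n(k)$ has a nonzero $p^{-1}$-linear map; (iv) $K_1(k)$ has a nonzero $p^{-1}$-linear map; (v) $K_1(k)$ is Frobenius split; (vi) there exists a nonzero continuous $k$-linear map $f\colon k^{1/p}\to k$.
   Context: A non-Archimedean field is a field with a multiplicative absolute value satisfying the ultrametric inequality, assumed complete and with nontrivial value group. The convergent power series ring $K_n(k)=k\langle X_1,\dots,X_n\rangle$ is the subring of $k[[X_1,\dots,X_n]]$ of series $\sum_{\nu}a_\nu X^\nu$ for which there exist real $r_1,\dots,r_n>0$ and $M>0$ with $|a_\nu|r_1^{\nu_1}\cdots r_n^{\nu_n}\le M$ for all $\nu\in\mathbb{Z}_{\ge0}^n$. For a ring $R$ of characteristic $p$, a $p^{-1}$-linear map is an $R$-linear map $F_{R*}R\to R$, where $F_{R*}R$ is $R$ with module structure $r\cdot x=r^px$; $R$ is Frobenius split if some such map sends $1$ to $1$. $k^{1/p}$ carries the unique absolute value extending that of $k$; continuity refers to the metric topologies. *)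

theory Defs
  imports Complex_Main "HOL-Computational_Algebra.Primes" "HOL-Algebra.Ring"
begin

definition nonarch_abs :: "('k::field \<Rightarrow> real) \<Rightarrow> bool" where
  "nonarch_abs absv \<longleftrightarrow>
     (\<forall>x. absv x \<ge> 0) \<and> (\<forall>x. absv x = 0 \<longleftrightarrow> x = 0) \<and>
     (\<forall>x y. absv (x * y) = absv x * absv y) \<and>
     (\<forall>x y. absv (x + y) \<le> max (absv x) (absv y))"

definition abs_complete :: "('k::field \<Rightarrow> real) \<Rightarrow> bool" where
  "abs_complete absv \<longleftrightarrow>
     (\<forall>X :: nat \<Rightarrow> 'k.
        (\<forall>e>0. \<exists>N. \<forall>m\<ge>N. \<forall>n\<ge>N. absv (X m - X n) < e) \<longrightarrow>
        (\<exists>L. \<forall>e>0. \<exists>N. \<forall>n\<ge>N. absv (X n - L) < e))"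

definition nontrivial_value_group :: "('k::field \<Rightarrow> real) \<Rightarrow> bool" where
  "nontrivial_value_group absv \<longleftrightarrow> (\<exists>x. absv x \<noteq> 0 \<and> absv x \<noteq> 1)"

text \<open>Multi-indices in Z_{>=0}^n are functions nat => nat vanishing at all i >= n.
  A power series is a coefficient function on multi-indices, zero off these.\<close>

definition idx :: "nat \<Rightarrow> (nat \<Rightarrow> nat) set" where
  "idx n = {\<nu>. \<forall>i\<ge>n. \<nu> i = 0}"

definition conv_series :: "('k::field \<Rightarrow> real) \<Rightarrow> nat \<Rightarrow> ((nat \<Rightarrow> nat) \<Rightarrow> 'k) set" where
  "conv_series absv n =
     {a. (\<forall>\<nu>. \<nu> \<notin> idx n \<longrightarrow> a \<nu> = 0) \<and>
         (\<exists>r :: nat \<Rightarrow> real. (\<forall>i<n. r i > 0) \<and>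
            (\<exists>M>0. \<forall>\<nu>\<in>idx n. absv (a \<nu>) * (\<Prod>i<n. r i ^ \<nu> i) \<le> M))}"

definition ps_mult :: "nat \<Rightarrow> ((nat \<Rightarrow> nat) \<Rightarrow> 'k::field) \<Rightarrow> ((nat \<Rightarrow> nat) \<Rightarrow> 'k) \<Rightarrow> (nat \<Rightarrow> nat) \<Rightarrow> 'k" where
  "ps_mult n a b = (\<lambda>\<nu>. if \<nu> \<in> idx n
      then (\<Sum>\<mu>\<in>{\<mu>\<in>idx n. \<forall>i. \<mu> i \<le> \<nu> i}. a \<mu> * b (\<lambda>i. \<nu> i - \<mu> i))
      else 0)"

definition K :: "('k::field \<Rightarrow> real) \<Rightarrow> nat \<Rightarrow> ((nat \<Rightarrow> nat) \<Rightarrow> 'k) ring" where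
  "K absv n = \<lparr> carrier = conv_series absv n,
                 mult = ps_mult n,
                 one = (\<lambda>\<nu>. if \<nu> = (\<lambda>_. 0) then 1 else 0),
                 zero = (\<lambda>_. 0),
                 add = (\<lambda>a b \<nu>. a \<nu> + b \<nu>) \<rparr>"

text \<open>A p^{-1}-linear map of R is an R-linear map F_*R -> R, i.e. an additive map
  phi : R -> R with phi (r^p x) = r phi x.\<close>

definition pinv_linear :: "('a, 'm) ring_scheme \<Rightarrow> nat \<Rightarrow> ('a \<Rightarrow> 'a) \<Rightarrow> bool" where
  "pinv_linear R p \<phi> \<longleftrightarrow>
     (\<forall>x\<in>carrier R. \<phi> x \<in> carrier R) \<and>
     (\<forall>x\<in>carrier R. \<forall>y\<in>carrier R. \<phi> (x \<oplus>\<^bsub>R\<^esub> y) = \<phi> x \<oplus>\<^bsub>R\<^esub> \<phi> y) \<and>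
     (\<forall>r\<in>carrier R. \<forall>x\<in>carrier R. \<phi> ((r [^]\<^bsub>R\<^esub> p) \<otimes>\<^bsub>R\<^esub> x) = r \<otimes>\<^bsub>R\<^esub> \<phi> x)"

definition has_nonzero_pinv_linear :: "('a, 'm) ring_scheme \<Rightarrow> nat \<Rightarrow> bool" where
  "has_nonzero_pinv_linear R p \<longleftrightarrow>
     (\<exists>\<phi>. pinv_linear R p \<phi> \<and> (\<exists>x\<in>carrier R. \<phi> x \<noteq> \<zero>\<^bsub>R\<^esub>))"

definition frobenius_split :: "('a, 'm) ring_scheme \<Rightarrow> nat \<Rightarrow> bool" where
  "frobenius_split R p \<longleftrightarrow> (\<exists>\<phi>. pinv_linear R p \<phi> \<and> \<phi> \<one>\<^bsub>R\<^esub> = \<one>\<^bsub>R\<^esub>)"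

text \<open>k^{1/p} is identified with k via y |-> y^p (an isomorphism of fields).
  Under it, the k-vector space structure of k^{1/p} becomes c . x = c^p x,
  and the unique extended absolute value |y| = |y^p|^{1/p} gives the metric
  d(x,x') = absv (x - x') powr (1/p) on k.  So a k-linear map k^{1/p} -> k
  is an additive g : k -> k with g (c^p x) = c g x.\<close>

definition root_p_linear :: "nat \<Rightarrow> ('k::field \<Rightarrow> 'k) \<Rightarrow> bool" where
  "root_p_linear p g \<longleftrightarrow>
     (\<forall>x y. g (x + y) = g x + g y) \<and> (\<forall>c x. g (c ^ p * x) = c * g x)"

definition root_p_continuous :: "('k::field \<Rightarrow> real) \<Rightarrow> nat \<Rightarrow> ('k \<Rightarrow> 'k) \<Rightarrow> bool" where
  "root_p_continuous absv p g \<longleftrightarrow>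
     (\<forall>x. \<forall>e>0. \<exists>d>0. \<forall>y. absv (y - x) powr (1 / real p) < d \<longrightarrow> absv (g y - g x) < e)"

end

theory Submission
  imports Defs "HOL-Library.Poly_Mapping"
begin

definition Sm :: "nat \<Rightarrow> (nat\<Rightarrow>nat) \<Rightarrow> (nat\<Rightarrow>nat) set" where
  "Sm n \<nu> = {\<mu>\<in>idx n. \<forall>i. \<mu> i \<le> \<nu> i}"

definition mon :: "'k::zero \<Rightarrow> (nat\<Rightarrow>nat) \<Rightarrow> (nat\<Rightarrow>nat) \<Rightarrow> 'k" where
  "mon c \<gamma> = (\<lambda>\<nu>. if \<nu> = \<gamma> then c else 0)"

definition ev :: "nat \<Rightarrow> nat \<Rightarrow> nat \<Rightarrow> nat" where
  "ev i m = (\<lambda>j. if j = i then m else 0)"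

lemma finite_Sm: "finite (Sm n \<nu>)"
proof -
  let ?E = "(\<lambda>f i. if i < n then f i else 0) ` PiE {..<n} (\<lambda>i. {..\<nu> i})"
  have "Sm n \<nu> \<subseteq> ?E"
  proof
    fix \<mu> assume m: "\<mu> \<in> Sm n \<nu>"
    have "\<mu> = (\<lambda>i. if i < n then restrict \<mu> {..<n} i else 0)"
      using m by (auto simp: Sm_def idx_def)
    moreover have "restrict \<mu> {..<n} \<in> PiE {..<n} (\<lambda>i. {..\<nu> i})"
      using m by (auto simp: Sm_def)
    ultimately show "\<mu> \<in> ?E" by blast
  qed
  moreover have "finite ?E" by (intro finite_imageI finite_PiE) auto
  ultimately show ?thesis by (rule finite_subset)
qed

lemma idx_add: "\<mu> \<in> idx n \<Longrightarrow> \<nu> \<in> idx n \<Longrightarrow> (\<lambda>i. \<mu> i + \<nu> i) \<in> idx n"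
  by (auto simp: idx_def)
lemma idx_diff: "\<nu> \<in> idx n \<Longrightarrow> (\<lambda>i. \<nu> i - \<mu> i) \<in> idx n"
  by (auto simp: idx_def)
lemma idx_mult: "\<nu> \<in> idx n \<Longrightarrow> (\<lambda>i. m * \<nu> i) \<in> idx n"
  by (auto simp: idx_def)
lemma idx_zero: "(\<lambda>_. 0) \<in> idx n" by (auto simp: idx_def)
lemma idx_ev: "i < n \<Longrightarrow> ev i m \<in> idx n" by (auto simp: idx_def ev_def)

lemma ps_mult_mon_left:
  assumes g: "\<gamma> \<in> idx n"
  shows "ps_mult n (mon c \<gamma>) y \<nu> =
    (if \<nu> \<in> idx n \<and> (\<forall>i. \<gamma> i \<le> \<nu> i) then c * y (\<lambda>i. \<nu> i - \<gamma> i) else 0)"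
proof (cases "\<nu> \<in> idx n")
  case True
  have "ps_mult n (mon c \<gamma>) y \<nu> = (\<Sum>\<mu>\<in>Sm n \<nu>. if \<mu> = \<gamma> then c * y (\<lambda>i. \<nu> i - \<gamma> i) else 0)"
    using True unfolding ps_mult_def Sm_def[symmetric] mon_def
    by (auto intro!: sum.cong)
  also have "\<dots> = (if \<gamma> \<in> Sm n \<nu> then c * y (\<lambda>i. \<nu> i - \<gamma> i) else 0)"
    by (simp add: finite_Sm)
  finally show ?thesis using True g by (simp add: Sm_def)
qed (simp add: ps_mult_def)

lemma mono_mult_mono:
  assumes "\<gamma> \<in> idx n" "\<delta> \<in> idx n"
  shows "ps_mult n (mon c \<gamma>) (mon d \<delta>) = mon (c*d) (\<lambda>i. \<gamma> i + \<delta> i)"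
proof
  fix \<nu>
  show "ps_mult n (mon c \<gamma>) (mon d \<delta>) \<nu> = mon (c*d) (\<lambda>i. \<gamma> i + \<delta> i) \<nu>"
  proof (cases "\<nu> \<in> idx n \<and> (\<forall>i. \<gamma> i \<le> \<nu> i)")
    case True
    have "((\<lambda>i. \<nu> i - \<gamma> i) = \<delta>) = (\<nu> = (\<lambda>i. \<gamma> i + \<delta> i))"
      using True by (auto simp: fun_eq_iff; metis le_add_diff_inverse)
    then show ?thesis unfolding ps_mult_mon_left[OF assms(1)] using True by (simp add: mon_def)
  next
    case False
    have "\<nu> \<noteq> (\<lambda>i. \<gamma> i + \<delta> i)" using False assms idx_add[OF assms] by auto
    then show ?thesis unfolding ps_mult_mon_left[OF assms(1)] using False by (auto simp: mon_def)
  qed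
qed

lemma K_simps:
  "carrier (K absv n) = conv_series absv n"
  "mult (K absv n) = ps_mult n"
  "one (K absv n) = mon 1 (\<lambda>_. 0)"
  "zero (K absv n) = (\<lambda>_. 0)"
  "add (K absv n) = (\<lambda>a b \<nu>. a \<nu> + b \<nu>)"
  by (auto simp: K_def mon_def fun_eq_iff)

lemma K_pow_0: "a [^]\<^bsub>K absv n\<^esub> (0::nat) = mon 1 (\<lambda>_. 0)"
  by (simp add: K_simps)
lemma K_pow_Suc: "a [^]\<^bsub>K absv n\<^esub> (Suc m) = ps_mult n (a [^]\<^bsub>K absv n\<^esub> m) a"
  by (simp add: nat_pow_def K_simps)

lemma mon_pow:
  assumes "\<gamma> \<in> idx n"
  shows "(mon c \<gamma>) [^]\<^bsub>K absv n\<^esub> m = mon (c^m) (\<lambda>i. m * \<gamma> i)"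
proof (induction m)
  case 0 then show ?case by (simp add: K_pow_0 K_simps)
next
  case (Suc m)
  then show ?case using assms idx_mult[OF assms, of m]
    by (simp add: K_pow_Suc K_simps mono_mult_mono algebra_simps)
qed

context fixes absv :: "'k::field \<Rightarrow> real" assumes na: "nonarch_abs absv"
begin

lemma av_nonneg: "absv x \<ge> 0" using na by (simp add: nonarch_abs_def)
lemma av_zero_iff: "absv x = 0 \<longleftrightarrow> x = 0" using na by (simp add: nonarch_abs_def)
lemma av_mult: "absv (x * y) = absv x * absv y" using na by (simp add: nonarch_abs_def)
lemma av_ultra: "absv (x + y) \<le> max (absv x) (absv y)" using na by (simp add: nonarch_abs_def)
lemma av_zero[simp]: "absv 0 = 0" using av_zero_iff by simp
lemma av_one[simp]: "absv 1 = 1"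
proof -
  have "absv 1 = absv 1 * absv 1" using av_mult[of 1 1] by simp
  moreover have "absv 1 \<noteq> 0" using av_zero_iff by simp
  ultimately show ?thesis by simp
qed
lemma av_m1: "absv (-1) = 1"
proof -
  have "absv (-1) * absv (-1) = 1" using av_mult[of "-1" "-1"] by simp
  moreover have "absv (-1) \<ge> 0" by (rule av_nonneg)
  ultimately show ?thesis by (metis abs_of_nonneg abs_one real_sqrt_abs2 real_sqrt_one)
qed
lemma av_minus: "absv (- x) = absv x"
  using av_mult[of "-1" x] av_m1 by simp
lemma av_power: "absv (x ^ m) = absv x ^ m"
  by (induction m) (auto simp: av_mult)
lemma av_add_le: "absv (x + y) \<le> absv x + absv y"
  using av_ultra[of x y] av_nonneg[of x] av_nonneg[of y] by linarith
lemma av_diff_sym: "absv (x - y) = absv (y - x)"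
  using av_minus[of "x - y"] by simp
lemma av_inverse: "absv (inverse x) = inverse (absv x)"
proof (cases "x = 0")
  case False
  then have "absv x * absv (inverse x) = 1" using av_mult[of x "inverse x"] by simp
  moreover have "absv x \<noteq> 0" using False av_zero_iff by simp
  ultimately show ?thesis by (metis inverse_unique mult.commute)
qed simp
lemma av_big: "absv y < absv x \<Longrightarrow> absv x \<le> absv (x + y)"
proof -
  assume a: "absv y < absv x"
  have "absv x \<le> max (absv (x + y)) (absv (- y))" using av_ultra[of "x + y" "- y"] by simp
  then show ?thesis using a av_minus[of y] by (auto simp: max_def split: if_splits)
qed

abbreviation C where "C n \<equiv> conv_series absv n"

lemma C_out: "a \<in> C n \<Longrightarrow> \<nu> \<notin> idx n \<Longrightarrow> a \<nu> = 0"
  by (simp add: conv_series_def)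

lemma C_bound: assumes "a \<in> C n"
  obtains r M where "\<forall>i<n. r i > 0" "M > 0" "\<forall>\<nu>\<in>idx n. absv (a \<nu>) * (\<Prod>i<n. r i ^ \<nu> i) \<le> M"
  using assms by (auto simp: conv_series_def)

lemma bounded_in:
  assumes "\<forall>\<nu>. \<nu> \<notin> idx n \<longrightarrow> a \<nu> = 0" "\<forall>\<nu>. absv (a \<nu>) \<le> B"
  shows "a \<in> C n"
proof -
  have "\<forall>\<nu>\<in>idx n. absv (a \<nu>) * (\<Prod>i<n. (1::real) ^ \<nu> i) \<le> max B 1"
    using assms(2) by (auto intro: le_max_iff_disj[THEN iffD2])
  then show ?thesis using assms(1) unfolding conv_series_def
    by (intro CollectI conjI) (auto intro!: exI[of _ "\<lambda>_. 1"] exI[of _ "max B 1"])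
qed

lemma mon_in: "\<gamma> \<in> idx n \<Longrightarrow> mon c \<gamma> \<in> C n"
  by (rule bounded_in[where B = "absv c"]) (auto simp: mon_def av_nonneg)

lemma zero_in: "(\<lambda>_. 0) \<in> C n"
  by (rule bounded_in[where B = 0]) auto

lemma add_in:
  assumes "a \<in> C n" "b \<in> C n"
  shows "(\<lambda>\<nu>. a \<nu> + b \<nu>) \<in> C n"
proof -
  obtain r M where r: "\<forall>i<n. r i > 0" "M > 0" "\<forall>\<nu>\<in>idx n. absv (a \<nu>) * (\<Prod>i<n. r i ^ \<nu> i) \<le> M"
    using C_bound[OF assms(1)] by blast
  obtain s N where s: "\<forall>i<n. s i > 0" "N > 0" "\<forall>\<nu>\<in>idx n. absv (b \<nu>) * (\<Prod>i<n. s i ^ \<nu> i) \<le> N"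
    using C_bound[OF assms(2)] by blast
  define t where "t i = min (r i) (s i)" for i
  have tp: "\<forall>i<n. t i > 0" using r s by (simp add: t_def)
  have "absv (a \<nu> + b \<nu>) * (\<Prod>i<n. t i ^ \<nu> i) \<le> M + N" if "\<nu> \<in> idx n" for \<nu>
  proof -
    have pt: "(\<Prod>i<n. t i ^ \<nu> i) \<ge> 0" using tp by (intro prod_nonneg) auto
    have "(\<Prod>i<n. t i ^ \<nu> i) \<le> (\<Prod>i<n. r i ^ \<nu> i)"
      using tp by (intro prod_mono) (auto simp: t_def intro!: power_mono)
    then have 1: "absv (a \<nu>) * (\<Prod>i<n. t i ^ \<nu> i) \<le> M"
      using r(3) that av_nonneg[of "a \<nu>"] by (meson mult_left_mono order_trans)
    have "(\<Prod>i<n. t i ^ \<nu> i) \<le> (\<Prod>i<n. s i ^ \<nu> i)"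
      using tp by (intro prod_mono) (auto simp: t_def intro!: power_mono)
    then have 2: "absv (b \<nu>) * (\<Prod>i<n. t i ^ \<nu> i) \<le> N"
      using s(3) that av_nonneg[of "b \<nu>"] by (meson mult_left_mono order_trans)
    have "absv (a \<nu> + b \<nu>) * (\<Prod>i<n. t i ^ \<nu> i) \<le> (absv (a \<nu>) + absv (b \<nu>)) * (\<Prod>i<n. t i ^ \<nu> i)"
      using av_add_le pt by (intro mult_right_mono) auto
    then show ?thesis using 1 2 by (simp add: distrib_right)
  qed
  then show ?thesis using assms tp r(2) s(2) unfolding conv_series_def
    by (intro CollectI conjI) (auto intro!: exI[of _ t] exI[of _ "M + N"])
qed

lemma sum_in:
  assumes "finite A" "\<forall>j\<in>A. F j \<in> C n"
  shows "(\<lambda>\<nu>. \<Sum>j\<in>A. F j \<nu>) \<in> C n"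
  using assms
proof (induction A rule: finite_induct)
  case empty then show ?case using zero_in by simp
next
  case (insert x A)
  then show ?case using add_in[of "F x" n "\<lambda>\<nu>. \<Sum>j\<in>A. F j \<nu>"] by simp
qed

lemma restrict_in:
  assumes "a \<in> C n"
  shows "(\<lambda>\<nu>. if P \<nu> then a \<nu> else 0) \<in> C n"
proof -
  obtain r M where r: "\<forall>i<n. r i > 0" "M > 0" "\<forall>\<nu>\<in>idx n. absv (a \<nu>) * (\<Prod>i<n. r i ^ \<nu> i) \<le> M"
    using C_bound[OF assms(1)] by blast
  have "\<forall>\<nu>\<in>idx n. absv (if P \<nu> then a \<nu> else 0) * (\<Prod>i<n. r i ^ \<nu> i) \<le> M"
    using r by auto
  then show ?thesis using assms r unfolding conv_series_def
    by (intro CollectI conjI) (auto intro!: exI[of _ r] exI[of _ M])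
qed

lemma prod_add_pow: "(\<Prod>i<n. (r i::real) ^ (\<nu> i + \<delta> i)) = (\<Prod>i<n. r i ^ \<nu> i) * (\<Prod>i<n. r i ^ \<delta> i)"
  by (simp add: power_add prod.distrib)

lemma shift_in:
  assumes "a \<in> C n" "\<delta> \<in> idx n"
  shows "(\<lambda>\<nu>. if \<nu> \<in> idx n then a (\<lambda>i. \<nu> i + \<delta> i) else 0) \<in> C n"
proof -
  obtain r M where r: "\<forall>i<n. r i > 0" "M > 0" "\<forall>\<nu>\<in>idx n. absv (a \<nu>) * (\<Prod>i<n. r i ^ \<nu> i) \<le> M"
    using C_bound[OF assms(1)] by blast
  define D where "D = (\<Prod>i<n. r i ^ \<delta> i)"
  have D: "D > 0" using r by (auto simp: D_def intro!: prod_pos)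
  have "absv (a (\<lambda>i. \<nu> i + \<delta> i)) * (\<Prod>i<n. r i ^ \<nu> i) \<le> M / D" if "\<nu> \<in> idx n" for \<nu>
  proof -
    have "absv (a (\<lambda>i. \<nu> i + \<delta> i)) * (\<Prod>i<n. r i ^ \<nu> i) * D \<le> M"
      using r(3) idx_add[OF that assms(2)] by (simp add: prod_add_pow[symmetric] D_def mult.assoc)
    then show ?thesis using D by (simp add: field_simps)
  qed
  then have "\<forall>\<nu>\<in>idx n. absv (if \<nu> \<in> idx n then a (\<lambda>i. \<nu> i + \<delta> i) else 0) * (\<Prod>i<n. r i ^ \<nu> i) \<le> M / D"
    by auto
  then show ?thesis using r D unfolding conv_series_def
    by (intro CollectI conjI) (auto intro!: exI[of _ r] exI[of _ "M / D"])
qed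

end

context fixes absv :: "'k::field \<Rightarrow> real" and n p :: nat and \<phi>
  assumes na: "nonarch_abs absv" and pl: "pinv_linear (K absv n) p \<phi>"
begin

lemma phi_in: "x \<in> C absv n \<Longrightarrow> \<phi> x \<in> C absv n"
  using pl by (simp add: pinv_linear_def K_simps)
lemma phi_add: "x \<in> C absv n \<Longrightarrow> y \<in> C absv n \<Longrightarrow> \<phi> (\<lambda>\<nu>. x \<nu> + y \<nu>) = (\<lambda>\<nu>. \<phi> x \<nu> + \<phi> y \<nu>)"
  using pl by (simp add: pinv_linear_def K_simps)
lemma phi_frob: "r \<in> C absv n \<Longrightarrow> x \<in> C absv n \<Longrightarrow>
   \<phi> (ps_mult n (r [^]\<^bsub>K absv n\<^esub> p) x) = ps_mult n r (\<phi> x)"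
  using pl by (simp add: pinv_linear_def K_simps)

lemma phi_zero: "\<phi> (\<lambda>_. 0) = (\<lambda>_. 0)"
proof -
  have "\<phi> (\<lambda>_. 0) = (\<lambda>\<nu>. \<phi> (\<lambda>_. 0) \<nu> + \<phi> (\<lambda>_. 0) \<nu>)"
    using phi_add[OF zero_in[OF na] zero_in[OF na]] by simp
  then show ?thesis by (metis add_cancel_right_right)
qed

lemma phi_sum:
  assumes "finite A" "\<forall>j\<in>A. F j \<in> C absv n"
  shows "\<phi> (\<lambda>\<nu>. \<Sum>j\<in>A. F j \<nu>) = (\<lambda>\<nu>. \<Sum>j\<in>A. \<phi> (F j) \<nu>)"
  using assms
proof (induction A rule: finite_induct)
  case empty then show ?case using phi_zero by simp
next
  case (insert x A)
  have "\<phi> (\<lambda>\<nu>. \<Sum>j\<in>insert x A. F j \<nu>) = \<phi> (\<lambda>\<nu>. F x \<nu> + (\<Sum>j\<in>A. F j \<nu>))"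
    using insert by simp
  also have "\<dots> = (\<lambda>\<nu>. \<phi> (F x) \<nu> + \<phi> (\<lambda>\<nu>. \<Sum>j\<in>A. F j \<nu>) \<nu>)"
    using insert sum_in[OF na, of A F n] by (intro phi_add) auto
  finally show ?case using insert by simp
qed

lemma phi_mon_frob:
  assumes "\<gamma> \<in> idx n" "w \<in> C absv n"
  shows "\<phi> (ps_mult n (mon (c^p) (\<lambda>i. p * \<gamma> i)) w) = ps_mult n (mon c \<gamma>) (\<phi> w)"
proof -
  have e: "mon c \<gamma> [^]\<^bsub>K absv n\<^esub> p = mon (c^p) (\<lambda>i. p * \<gamma> i)"
    by (rule mon_pow[OF assms(1)])
  show ?thesis using phi_frob[OF mon_in[OF na assms(1)] assms(2), of c] unfolding e .
qed

lemma phi_tail: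
  assumes x: "x \<in> C absv n" and g: "\<gamma> \<in> idx n"
    and supp: "\<forall>\<nu>. x \<nu> \<noteq> 0 \<longrightarrow> (\<forall>i. p * \<gamma> i \<le> \<nu> i)"
    and nle: "\<not> (\<forall>i. \<gamma> i \<le> \<nu> i)"
  shows "\<phi> x \<nu> = 0"
proof -
  have pg: "(\<lambda>i. p * \<gamma> i) \<in> idx n" using idx_mult[OF g] .
  define w where "w = (\<lambda>\<nu>. if \<nu> \<in> idx n then x (\<lambda>i. \<nu> i + p * \<gamma> i) else 0)"
  have w: "w \<in> C absv n" unfolding w_def by (rule shift_in[OF na x pg])
  have eq: "x = ps_mult n (mon (1^p) (\<lambda>i. p * \<gamma> i)) w"
  proof
    fix \<mu>
    show "x \<mu> = ps_mult n (mon (1^p) (\<lambda>i. p * \<gamma> i)) w \<mu>"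
    proof (cases "\<mu> \<in> idx n \<and> (\<forall>i. p * \<gamma> i \<le> \<mu> i)")
      case True
      then have "(\<lambda>i. (\<mu> i - p * \<gamma> i) + p * \<gamma> i) = \<mu>" by auto
      then show ?thesis using True unfolding ps_mult_mon_left[OF pg] w_def
        by (simp add: idx_diff)
    next
      case False
      then have "x \<mu> = 0" using supp C_out[OF na x] by blast
      then show ?thesis using False unfolding ps_mult_mon_left[OF pg] by auto
    qed
  qed
  have "\<phi> x = ps_mult n (mon 1 \<gamma>) (\<phi> w)"
    using phi_mon_frob[OF g w, of 1] eq by simp
  then show ?thesis using nle by (auto simp: ps_mult_mon_left[OF g])
qed

end

context fixes absv :: "'k::field \<Rightarrow> real" and n p :: nat and \<phi>
  assumes na: "nonarch_abs absv" and pl: "pinv_linear (K absv n) p \<phi>"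
begin

lemma phi_nonzero_mon:
  assumes x0: "x0 \<in> C absv n" and nz: "\<phi> x0 \<alpha> \<noteq> 0"
  shows "\<exists>\<beta>\<in>idx n. \<exists>c. \<phi> (mon c \<beta>) \<alpha> \<noteq> 0"
proof (rule ccontr)
  assume H0: "\<not> ?thesis"
  have aidx: "\<alpha> \<in> idx n" using nz C_out[OF na phi_in[OF na pl x0]] by blast
  define B where "B i = p * (\<alpha> i + 1)" for i
  define F where "F = {\<beta>\<in>idx n. \<forall>i<n. \<beta> i < B i}"
  have finF: "finite F"
  proof (rule finite_subset[OF _ finite_Sm[of n B]])
    show "F \<subseteq> Sm n B" by (auto simp: F_def Sm_def idx_def) (metis less_imp_le not_le zero_le)
  qed
  define P where "P = (\<lambda>\<nu>. \<Sum>\<beta>\<in>F. mon (x0 \<beta>) \<beta> \<nu>)"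
  define y where "y i = (\<lambda>\<nu>. if \<nu> \<in> idx n \<and> (\<forall>j<i. \<nu> j < B j) \<and> B i \<le> \<nu> i then x0 \<nu> else 0)" for i
  define Y where "Y = (\<lambda>\<nu>. \<Sum>i<n. y i \<nu>)"
  have Fidx: "F \<subseteq> idx n" by (auto simp: F_def)
  have yC: "y i \<in> C absv n" for i
  proof -
    have "y i = (\<lambda>\<nu>. if \<nu> \<in> idx n \<and> (\<forall>j<i. \<nu> j < B j) \<and> B i \<le> \<nu> i then x0 \<nu> else 0)"
      by (simp add: y_def)
    then show ?thesis using restrict_in[OF na x0] by simp
  qed
  have PC: "P \<in> C absv n" unfolding P_def
    using Fidx by (intro sum_in[OF na finF]) (auto intro: mon_in[OF na])
  have YC: "Y \<in> C absv n" unfolding Y_def using yC by (intro sum_in[OF na]) auto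
  have dec: "x0 = (\<lambda>\<nu>. P \<nu> + Y \<nu>)"
  proof
    fix \<nu>
    show "x0 \<nu> = P \<nu> + Y \<nu>"
    proof (cases "\<nu> \<in> idx n")
      case False
      then have "x0 \<nu> = 0" using C_out[OF na x0] by blast
      moreover have "P \<nu> = 0" unfolding P_def using False Fidx by (intro sum.neutral) (auto simp: mon_def)
      moreover have "Y \<nu> = 0" unfolding Y_def y_def using False by simp
      ultimately show ?thesis by simp
    next
      case True
      show ?thesis
      proof (cases "\<forall>i<n. \<nu> i < B i")
        case c1: True
        then have "\<nu> \<in> F" using True by (simp add: F_def)
        then have "P \<nu> = x0 \<nu>" unfolding P_def mon_def using finF
          by (simp add: sum.delta'[of F \<nu>] eq_commute[of _ \<nu>] if_distrib cong: if_cong)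
        moreover have "Y \<nu> = 0" unfolding Y_def y_def using c1 by (intro sum.neutral) (auto simp: not_le)
        ultimately show ?thesis by simp
      next
        case c2: False
        define i0 where "i0 = (LEAST i. B i \<le> \<nu> i)"
        have ex: "\<exists>i. B i \<le> \<nu> i" using c2 by (auto simp: not_less)
        have i0: "B i0 \<le> \<nu> i0" unfolding i0_def using ex by (metis LeastI)
        have i0min: "\<And>j. j < i0 \<Longrightarrow> \<nu> j < B j" unfolding i0_def
          using not_less_Least not_le by blast
        have i0n: "i0 < n"
        proof (rule ccontr)
          assume "\<not> i0 < n"
          then have "\<forall>i<n. \<nu> i < B i" using i0min by auto
          with c2 show False by simp
        qed
        have "\<nu> \<notin> F" using c2 by (simp add: F_def)
        then have "P \<nu> = 0" unfolding P_def by (intro sum.neutral) (auto simp: mon_def)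
        moreover have "y i \<nu> = (if i = i0 then x0 \<nu> else 0)" if "i < n" for i
        proof (cases "i = i0")
          case True then show ?thesis using i0 i0min \<open>\<nu> \<in> idx n\<close> by (simp add: y_def)
        next
          case False
          then have "i < i0 \<or> i0 < i" by auto
          then have "\<not> ((\<forall>j<i. \<nu> j < B j) \<and> B i \<le> \<nu> i)" using i0min i0 by (auto simp: not_le)
          then show ?thesis using False by (auto simp: y_def)
        qed
        then have "Y \<nu> = (\<Sum>i<n. if i = i0 then x0 \<nu> else 0)" unfolding Y_def
          by (intro sum.cong) auto
        then have "Y \<nu> = x0 \<nu>" using i0n by simp
        ultimately show ?thesis by simp
      qed
    qed
  qed
  have "\<phi> x0 \<alpha> = \<phi> (\<lambda>\<nu>. P \<nu> + Y \<nu>) \<alpha>" using dec by simp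
  also have "\<dots> = \<phi> P \<alpha> + \<phi> Y \<alpha>" using phi_add[OF na pl PC YC] by simp
  finally have "\<phi> x0 \<alpha> = \<phi> P \<alpha> + \<phi> Y \<alpha>" .
  moreover have "\<phi> P \<alpha> = 0"
  proof -
    have "\<phi> P = (\<lambda>\<nu>. \<Sum>\<beta>\<in>F. \<phi> (mon (x0 \<beta>) \<beta>) \<nu>)" unfolding P_def
      using Fidx by (intro phi_sum[OF na pl finF]) (auto intro: mon_in[OF na])
    then show ?thesis using H0 Fidx by (auto intro!: sum.neutral)
  qed
  moreover have "\<phi> Y \<alpha> = 0"
  proof -
    have "\<phi> Y = (\<lambda>\<nu>. \<Sum>i<n. \<phi> (y i) \<nu>)" unfolding Y_def
      using yC by (intro phi_sum[OF na pl]) auto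
    moreover have "\<phi> (y i) \<alpha> = 0" if "i < n" for i
    proof (rule phi_tail[OF na pl yC idx_ev[OF that]])
      show "\<forall>\<nu>. y i \<nu> \<noteq> 0 \<longrightarrow> (\<forall>j. p * ev i (\<alpha> i + 1) j \<le> \<nu> j)"
        by (auto simp: y_def ev_def B_def split: if_splits)
      show "\<not> (\<forall>j. ev i (\<alpha> i + 1) j \<le> \<alpha> j)" by (auto simp: ev_def intro!: exI[of _ i])
    qed
    ultimately show ?thesis by simp
  qed
  ultimately show False using nz by simp
qed

end

primrec pre_seq :: "(nat \<Rightarrow> (nat \<Rightarrow> 'a) \<Rightarrow> 'a) \<Rightarrow> nat \<Rightarrow> nat \<Rightarrow> 'a::zero" where
  "pre_seq ch 0 = (\<lambda>_. 0)"
| "pre_seq ch (Suc L) = (pre_seq ch L)(L := ch L (pre_seq ch L))"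

lemma pre_seq_eq: "j < L \<Longrightarrow> pre_seq ch L j = pre_seq ch (Suc j) j"
proof (induction L)
  case 0 then show ?case by simp
next
  case (Suc L)
  then show ?case by (cases "j = L") auto
qed

lemma prod_ev: "0 < n \<Longrightarrow> (\<Prod>i<n. (r i::real) ^ ev 0 m i) = r 0 ^ m"
proof -
  assume "0 < n"
  have "(\<Prod>i<n. (r i::real) ^ ev 0 m i) = (\<Prod>i<n. if i = 0 then r 0 ^ m else 1)"
    by (intro prod.cong) (auto simp: ev_def)
  then show ?thesis using \<open>0 < n\<close> by simp
qed

context fixes absv :: "'k::field \<Rightarrow> real" and n p :: nat and \<phi>
  assumes na: "nonarch_abs absv" and pl: "pinv_linear (K absv n) p \<phi>"
begin

lemma no_unbounded:
  assumes n0: "0 < n" and p0: "0 < p" and bidx: "\<beta> \<in> idx n"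
    and unb: "\<forall>T. \<exists>c. absv c \<le> 1 \<and> T \<le> absv (\<phi> (mon c \<beta>) \<alpha>)"
  shows False
proof -
  define Fc where "Fc \<gamma> c = \<phi> (mon c \<beta>) \<gamma>" for \<gamma> c
  obtain c1 where "1 \<le> absv (Fc \<alpha> c1)" using unb[rule_format, of 1] unfolding Fc_def by blast
  then have "Fc \<alpha> c1 \<noteq> 0" using av_zero[OF na] by auto
  then have aidx: "\<alpha> \<in> idx n" unfolding Fc_def
    using C_out[OF na phi_in[OF na pl mon_in[OF na bidx]]] by blast
  define d where "d = \<alpha> 0 + 1"
  have d0: "0 < d" by (simp add: d_def)
  define pos where "pos j = (\<lambda>i. p * ev 0 (d*j) i + \<beta> i)" for j
  have posidx: "pos j \<in> idx n" for j
    unfolding pos_def using idx_add[OF idx_mult[OF idx_ev[OF n0]] bidx] by simp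
  have pos0: "pos j 0 = p * (d * j) + \<beta> 0" for j by (simp add: pos_def ev_def)
  have posinj: "pos j = pos j' \<Longrightarrow> j = j'" for j j'
    using pos0[of j] pos0[of j'] p0 d0 by (metis add_right_cancel mult_left_cancel not_gr0)
  define S where "S J c' = (\<Sum>j<J. Fc (\<lambda>i. \<alpha> i + ev 0 (d*(J-j)) i) (c' j))" for J c'
  define Tt where "Tt J c' = max (absv (S J c') + 1) ((real J + 1)^(J+1))" for J c'
  define ch where "ch J c' = (SOME t. absv t \<le> 1 \<and> Tt J c' \<le> absv (Fc \<alpha> t))" for J c'
  define c where "c J = pre_seq ch (Suc J) J" for J
  have prec: "pre_seq ch J = (\<lambda>j. if j < J then c j else pre_seq ch J j)" for J
    using pre_seq_eq c_def by (auto simp: fun_eq_iff)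
  have cJ: "absv (c J) \<le> 1 \<and> Tt J c \<le> absv (Fc \<alpha> (c J))" for J
  proof -
    have "S J (pre_seq ch J) = S J c" unfolding S_def using pre_seq_eq[of _ J ch] c_def
      by (intro sum.cong) simp_all
    then have "c J = ch J c" by (simp add: c_def ch_def Tt_def)
    then show ?thesis unfolding ch_def using unb Fc_def by (metis (mono_tags, lifting) someI_ex)
  qed
  define x where "x = (\<lambda>\<nu>. if \<exists>j. \<nu> = pos j then c (SOME j. \<nu> = pos j) else 0)"
  have xpos: "x (pos j) = c j" for j
  proof -
    have "(SOME j'. pos j = pos j') = j" using posinj by (metis (mono_tags) someI_ex)
    then show ?thesis by (auto simp: x_def)
  qed
  have xnot: "(\<forall>j. \<nu> \<noteq> pos j) \<Longrightarrow> x \<nu> = 0" for \<nu> by (auto simp: x_def)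
  have xC: "x \<in> C absv n"
  proof (rule bounded_in[OF na, where B = 1])
    show "\<forall>\<nu>. \<nu> \<notin> idx n \<longrightarrow> x \<nu> = 0" using posidx xnot by metis
    show "\<forall>\<nu>. absv (x \<nu>) \<le> 1"
      using xpos xnot cJ by (metis av_zero[OF na] zero_less_one less_imp_le)
  qed
  have coef: "\<phi> x (\<lambda>i. \<alpha> i + ev 0 (d*J) i) = Fc \<alpha> (c J) + S J c" for J
  proof -
    define \<gamma> where "\<gamma> = (\<lambda>i. \<alpha> i + ev 0 (d*J) i)"
    have gidx: "\<gamma> \<in> idx n" unfolding \<gamma>_def using idx_add[OF aidx idx_ev[OF n0]] .
    define s where "s = d * (J + 1)"
    define xT where "xT = (\<lambda>\<nu>. if \<beta> 0 + p * s \<le> \<nu> 0 then x \<nu> else 0)"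
    have xTC: "xT \<in> C absv n" unfolding xT_def by (rule restrict_in[OF na xC])
    define M where "M j = mon (c j) (pos j)" for j
    have MC: "M j \<in> C absv n" for j unfolding M_def by (rule mon_in[OF na posidx])
    have dec: "x = (\<lambda>\<nu>. (\<Sum>j\<le>J. M j \<nu>) + xT \<nu>)"
    proof
      fix \<nu>
      show "x \<nu> = (\<Sum>j\<le>J. M j \<nu>) + xT \<nu>"
      proof (cases "\<exists>j. \<nu> = pos j")
        case True
        then obtain j where j: "\<nu> = pos j" by blast
        have sumM: "(\<Sum>j'\<le>J. M j' \<nu>) = (\<Sum>j'\<le>J. if j' = j then c j else 0)"
          unfolding M_def mon_def j using posinj by (intro sum.cong) auto
        show ?thesis
        proof (cases "j \<le> J")
          case True
          have "\<not> \<beta> 0 + p * s \<le> \<nu> 0"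
          proof -
            have "d * j < d * (J + 1)" using True d0 by (intro mult_strict_left_mono) auto
            then have "p * (d * j) < p * s" using p0 s_def by simp
            then show ?thesis using j pos0 by simp
          qed
          then show ?thesis using True sumM j xpos by (simp add: xT_def)
        next
          case False
          have "\<beta> 0 + p * s \<le> \<nu> 0"
          proof -
            have "d * (J + 1) \<le> d * j" using False by (intro mult_left_mono) auto
            then have "p * s \<le> p * (d * j)" using s_def by simp
            then show ?thesis using j pos0 by simp
          qed
          then show ?thesis using False sumM j xpos by (simp add: xT_def)
        qed
      next
        case False
        then have "\<forall>j. M j \<nu> = 0" by (auto simp: M_def mon_def)
        then show ?thesis using False xnot by (simp add: xT_def)
      qed
    qed
    have SC: "(\<lambda>\<nu>. \<Sum>j\<le>J. M j \<nu>) \<in> C absv n" using MC by (intro sum_in[OF na]) auto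
    have "\<phi> x = (\<lambda>\<nu>. \<phi> (\<lambda>\<nu>. \<Sum>j\<le>J. M j \<nu>) \<nu> + \<phi> xT \<nu>)"
      using phi_add[OF na pl SC xTC] dec by simp
    also have "\<phi> (\<lambda>\<nu>. \<Sum>j\<le>J. M j \<nu>) = (\<lambda>\<nu>. \<Sum>j\<le>J. \<phi> (M j) \<nu>)"
      using MC by (intro phi_sum[OF na pl]) auto
    finally have e1: "\<phi> x \<gamma> = (\<Sum>j\<le>J. \<phi> (M j) \<gamma>) + \<phi> xT \<gamma>" by simp
    have tail: "\<phi> xT \<gamma> = 0"
    proof (rule phi_tail[OF na pl xTC idx_ev[OF n0]])
      show "\<forall>\<nu>. xT \<nu> \<noteq> 0 \<longrightarrow> (\<forall>i. p * ev 0 s i \<le> \<nu> i)"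
        by (auto simp: xT_def ev_def)
      show "\<not> (\<forall>i. ev 0 s i \<le> \<gamma> i)"
      proof -
        have "\<not> ev 0 s 0 \<le> \<gamma> 0" by (simp add: ev_def \<gamma>_def s_def d_def)
        then show ?thesis by blast
      qed
    qed
    have Mj: "\<phi> (M j) \<gamma> = Fc (\<lambda>i. \<alpha> i + ev 0 (d*(J-j)) i) (c j)" if "j \<le> J" for j
    proof -
      have eidx: "ev 0 (d*j) \<in> idx n" by (rule idx_ev[OF n0])
      have "M j = ps_mult n (mon (1^p) (\<lambda>i. p * ev 0 (d*j) i)) (mon (c j) \<beta>)"
        unfolding M_def pos_def using mono_mult_mono[OF idx_mult[OF eidx] bidx, of 1 p "c j"] by simp
      then have "\<phi> (M j) = ps_mult n (mon 1 (ev 0 (d*j))) (\<phi> (mon (c j) \<beta>))"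
        using phi_mon_frob[OF na pl eidx mon_in[OF na bidx], of 1] by simp
      moreover have "\<forall>i. ev 0 (d*j) i \<le> \<gamma> i" using that
        by (auto simp: ev_def \<gamma>_def intro: trans_le_add2 mult_le_mono2)
      moreover have "(\<lambda>i. \<gamma> i - ev 0 (d*j) i) = (\<lambda>i. \<alpha> i + ev 0 (d*(J-j)) i)"
        using that by (auto simp: ev_def \<gamma>_def fun_eq_iff diff_mult_distrib2)
      ultimately show ?thesis using gidx by (simp add: ps_mult_mon_left[OF eidx] Fc_def)
    qed
    have "(\<Sum>j\<le>J. \<phi> (M j) \<gamma>) = (\<Sum>j\<le>J. Fc (\<lambda>i. \<alpha> i + ev 0 (d*(J-j)) i) (c j))"
      using Mj by (intro sum.cong) auto
    also have "\<dots> = Fc \<alpha> (c J) + S J c"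
    proof -
      have "(\<lambda>i. \<alpha> i + ev 0 (d*(J-J)) i) = \<alpha>" by (auto simp: ev_def fun_eq_iff)
      then show ?thesis by (simp add: S_def atMost_Suc lessThan_Suc_atMost[symmetric])
    qed
    finally show ?thesis using e1 tail \<gamma>_def by simp
  qed
  obtain r M where r: "\<forall>i<n. r i > 0" "M > 0"
    "\<forall>\<nu>\<in>idx n. absv (\<phi> x \<nu>) * (\<Prod>i<n. r i ^ \<nu> i) \<le> M"
    using C_bound[OF na phi_in[OF na pl xC]] by blast
  define A where "A = (\<Prod>i<n. r i ^ \<alpha> i)"
  have A0: "A > 0" using r by (auto simp: A_def intro!: prod_pos)
  define q where "q = r 0 ^ d"
  have q0: "q > 0" using r n0 by (simp add: q_def)
  define J where "J = nat (ceiling (max (M / A) (1 / q)))"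
  have J1: "M / A \<le> real J" "1 / q \<le> real J" unfolding J_def by linarith+
  have lower: "(real J + 1)^(J+1) \<le> absv (\<phi> x (\<lambda>i. \<alpha> i + ev 0 (d*J) i))"
  proof -
    have "absv (S J c) < absv (Fc \<alpha> (c J))" using cJ[of J] by (simp add: Tt_def)
    then have "absv (Fc \<alpha> (c J)) \<le> absv (Fc \<alpha> (c J) + S J c)" by (rule av_big[OF na])
    moreover have "(real J + 1)^(J+1) \<le> absv (Fc \<alpha> (c J))" using cJ[of J] by (simp add: Tt_def)
    ultimately show ?thesis using coef by simp
  qed
  have upper: "absv (\<phi> x (\<lambda>i. \<alpha> i + ev 0 (d*J) i)) * (A * q ^ J) \<le> M"
  proof -
    have "(\<Prod>i<n. r i ^ (\<alpha> i + ev 0 (d*J) i)) = A * q ^ J"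
      by (simp add: prod_add_pow[OF na] A_def prod_ev[OF n0] q_def power_mult)
    then show ?thesis using r(3) idx_add[OF aidx idx_ev[OF n0]] by metis
  qed
  have "(real J + 1) * q \<ge> 1" using J1(2) q0 by (simp add: field_simps)
  then have "((real J + 1) * q) ^ J \<ge> 1" by (rule one_le_power)
  then have "(real J + 1) ^ J * q ^ J \<ge> 1" by (simp add: power_mult_distrib)
  then have "(real J + 1) * A * ((real J + 1) ^ J * q ^ J) \<ge> (real J + 1) * A * 1"
    using A0 by (intro mult_left_mono) auto
  moreover have "(real J + 1) ^ (J+1) * (A * q ^ J) = (real J + 1) * A * ((real J + 1) ^ J * q ^ J)"
    by (simp only: power_Suc Suc_eq_plus1[symmetric] mult_ac)
  ultimately have X: "(real J + 1) ^ (J+1) * (A * q ^ J) \<ge> (real J + 1) * A" by (simp only: mult_1_right)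
  have Y: "(real J + 1) * A > M" using J1(1) A0 by (simp add: field_simps)
  have Z: "(real J + 1)^(J+1) * (A * q ^ J) \<le> absv (\<phi> x (\<lambda>i. \<alpha> i + ev 0 (d*J) i)) * (A * q ^ J)"
    using lower A0 q0 by (intro mult_right_mono) auto
  from X Y Z upper show False by linarith
qed

end

lemma rpl_zero: "root_p_linear p f \<Longrightarrow> f 0 = 0"
  unfolding root_p_linear_def by (metis add_cancel_right_right add_0)
lemma rpl_diff: "root_p_linear p f \<Longrightarrow> f (y - x) = f y - f x"
  unfolding root_p_linear_def by (metis add_diff_cancel_left' diff_add_cancel eq_diff_eq)


context fixes absv :: "'k::field \<Rightarrow> real" assumes na: "nonarch_abs absv"
begin

lemma big_elem: assumes "nontrivial_value_group absv" shows "\<exists>\<pi>. absv \<pi> > 1"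
proof -
  obtain a where a: "absv a \<noteq> 0" "absv a \<noteq> 1" using assms by (auto simp: nontrivial_value_group_def)
  show ?thesis
  proof (cases "absv a > 1")
    case True then show ?thesis by blast
  next
    case False
    then have "absv a < 1" "absv a > 0" using a av_nonneg[OF na, of a] by auto
    then have "absv (inverse a) > 1" using av_inverse[OF na, of a] by (simp add: one_less_inverse)
    then show ?thesis by blast
  qed
qed

lemma unbounded:
  assumes nt: "nontrivial_value_group absv" and rpl: "root_p_linear p f"
    and nc: "\<not> root_p_continuous absv p f" and p0: "0 < p"
  shows "\<exists>c. absv c \<le> 1 \<and> T \<le> absv (f c)"
proof -
  obtain \<pi> where pi: "absv \<pi> > 1" using big_elem[OF nt] by blast
  obtain x e where e: "e > 0" and
    H: "\<forall>d>0. \<exists>y. absv (y - x) powr (1 / real p) < d \<and> \<not> absv (f y - f x) < e"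
    using nc unfolding root_p_continuous_def by blast
  obtain m where m: "T / e < absv \<pi> ^ m" using real_arch_pow[OF pi] by blast
  define D where "D = inverse (absv \<pi> ^ (m * p))"
  have D0: "D > 0" using pi by (simp add: D_def)
  define d where "d = D powr (1 / real p)"
  have d0: "d > 0" using D0 by (simp add: d_def)
  obtain y where y: "absv (y - x) powr (1 / real p) < d" "\<not> absv (f y - f x) < e"
    using H d0 by blast
  define z where "z = y - x"
  have fz: "e \<le> absv (f z)" using y(2) rpl_diff[OF rpl] by (simp add: z_def)
  have "(absv z powr (1 / real p)) powr real p < d powr real p"
    using y(1) p0 by (intro powr_less_mono2) (auto simp: z_def)
  then have zD: "absv z < D" using p0 D0 av_nonneg[OF na, of z]
    by (simp add: d_def powr_powr)
  define c where "c = (\<pi> ^ m) ^ p * z"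
  have fc: "f c = \<pi> ^ m * f z" using rpl by (simp add: root_p_linear_def c_def)
  have "absv c = (absv \<pi> ^ m) ^ p * absv z" by (simp add: c_def av_mult[OF na] av_power[OF na])
  also have "\<dots> \<le> (absv \<pi> ^ m) ^ p * D" using zD pi by (intro mult_left_mono) auto
  also have "\<dots> = 1" using pi by (simp add: D_def power_mult)
  finally have c1: "absv c \<le> 1" .
  have "T < absv \<pi> ^ m * e" using m e by (simp add: field_simps)
  also have "\<dots> \<le> absv \<pi> ^ m * absv (f z)" using fz pi by (intro mult_left_mono) auto
  also have "\<dots> = absv (f c)" by (simp add: fc av_mult[OF na] av_power[OF na])
  finally show ?thesis using c1 by (intro exI[of _ c]) auto
qed

lemma iii_vi:
  assumes nt: "nontrivial_value_group absv" and p0: "0 < p" and n0: "0 < n"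
    and h: "has_nonzero_pinv_linear (K absv n) p"
  shows "\<exists>g. root_p_linear p g \<and> root_p_continuous absv p g \<and> (\<exists>x. g x \<noteq> 0)"
proof -
  obtain \<phi> x0 where pl: "pinv_linear (K absv n) p \<phi>" and x0: "x0 \<in> C absv n"
    and nz: "\<phi> x0 \<noteq> (\<lambda>_. 0)"
    using h by (auto simp: has_nonzero_pinv_linear_def K_simps)
  obtain \<alpha> where a: "\<phi> x0 \<alpha> \<noteq> 0" using nz by auto
  obtain \<beta> where b: "\<beta> \<in> idx n" and ex: "\<exists>c. \<phi> (mon c \<beta>) \<alpha> \<noteq> 0"
    using phi_nonzero_mon[of absv n p \<phi> x0 \<alpha>] na pl x0 a by blast
  obtain c0 where bc: "\<phi> (mon c0 \<beta>) \<alpha> \<noteq> 0" using ex by (rule exE)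
  define g where "g c = \<phi> (mon c \<beta>) \<alpha>" for c
  have add: "g (x + y) = g x + g y" for x y
  proof -
    have "mon (x + y) \<beta> = (\<lambda>\<nu>. mon x \<beta> \<nu> + mon y \<beta> \<nu>)" by (auto simp: mon_def)
    then show ?thesis unfolding g_def using phi_add[OF na pl mon_in[OF na b] mon_in[OF na b]] by simp
  qed
  have sc: "g (c ^ p * x) = c * g x" for c x
  proof -
    have "mon (c ^ p * x) \<beta> = ps_mult n (mon (c^p) (\<lambda>i. p * (\<lambda>_. 0::nat) i)) (mon x \<beta>)"
      using mono_mult_mono[OF idx_mult[OF idx_zero] b, of "c^p" p x] by simp
    then have "\<phi> (mon (c ^ p * x) \<beta>) = ps_mult n (mon c (\<lambda>_. 0)) (\<phi> (mon x \<beta>))"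
      using phi_mon_frob[OF na pl idx_zero mon_in[OF na b], of c] by simp
    then show ?thesis unfolding g_def
      using C_out[OF na phi_in[OF na pl mon_in[OF na b, of x]], of \<alpha>]
      by (auto simp: ps_mult_mon_left[OF idx_zero])
  qed
  have rpl: "root_p_linear p g" using add sc by (simp add: root_p_linear_def)
  have cont: "root_p_continuous absv p g"
  proof (rule ccontr)
    assume "\<not> root_p_continuous absv p g"
    then have "\<forall>T. \<exists>c. absv c \<le> 1 \<and> T \<le> absv (\<phi> (mon c \<beta>) \<alpha>)"
      using unbounded[OF nt rpl _ p0] unfolding g_def by blast
    then show False using no_unbounded[OF na pl n0 p0 b] by blast
  qed
  have "g c0 \<noteq> 0" using bc by (simp add: g_def)
  then show ?thesis using rpl cont by blast
qed

end

definition toPM :: "(nat \<Rightarrow> nat) \<Rightarrow> (nat \<Rightarrow>\<^sub>0 nat)" where "toPM = Abs_poly_mapping"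

lemma fin_idx: "\<nu> \<in> idx n \<Longrightarrow> finite {i. \<nu> i \<noteq> 0}"
  by (rule finite_subset[of _ "{..<n}"]) (auto simp: idx_def not_less[symmetric])

lemma lookup_toPM: "\<nu> \<in> idx n \<Longrightarrow> Poly_Mapping.lookup (toPM \<nu>) = \<nu>"
  unfolding toPM_def by (rule lookup_Abs_poly_mapping[OF fin_idx])

lemma toPM_eq: "\<nu> \<in> idx n \<Longrightarrow> \<mu> \<in> idx n \<Longrightarrow> (toPM \<nu> = toPM \<mu>) = (\<nu> = \<mu>)"
  by (metis lookup_toPM)

lemma toPM_lookup: "toPM (Poly_Mapping.lookup k) = k"
  by (simp add: toPM_def poly_mapping.lookup_inverse)

lemma lookup_mult_idx:
  fixes f g :: "(nat \<Rightarrow>\<^sub>0 nat) \<Rightarrow>\<^sub>0 'a::comm_semiring_1"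
  assumes nu: "\<nu> \<in> idx n"
  shows "Poly_Mapping.lookup (f * g) (toPM \<nu>) =
    (\<Sum>\<mu>\<in>Sm n \<nu>. Poly_Mapping.lookup f (toPM \<mu>) * Poly_Mapping.lookup g (toPM (\<lambda>i. \<nu> i - \<mu> i)))"
proof -
  define A where "A = toPM ` Sm n \<nu>"
  have finA: "finite A" unfolding A_def by (simp add: finite_Sm)
  have inner: "Sum_any (\<lambda>q. Poly_Mapping.lookup g q when toPM \<nu> = l + q) =
      (if l \<in> A then Poly_Mapping.lookup g (toPM (\<lambda>i. \<nu> i - Poly_Mapping.lookup l i)) else 0)" for l
  proof (cases "l \<in> A")
    case True
    then obtain \<mu> where mu: "\<mu> \<in> Sm n \<nu>" "l = toPM \<mu>" by (auto simp: A_def)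
    have midx: "\<mu> \<in> idx n" using mu by (simp add: Sm_def)
    have ll: "Poly_Mapping.lookup l = \<mu>" using mu lookup_toPM[OF midx] by simp
    have "(toPM \<nu> = l + q) = (q = toPM (\<lambda>i. \<nu> i - \<mu> i))" for q
    proof
      assume "toPM \<nu> = l + q"
      then have "\<nu> = (\<lambda>i. \<mu> i + Poly_Mapping.lookup q i)"
        using lookup_toPM[OF nu] ll by (metis lookup_add ext)
      then have "Poly_Mapping.lookup q = (\<lambda>i. \<nu> i - \<mu> i)" by auto
      then show "q = toPM (\<lambda>i. \<nu> i - \<mu> i)" by (metis toPM_lookup)
    next
      assume q: "q = toPM (\<lambda>i. \<nu> i - \<mu> i)"
      have "Poly_Mapping.lookup (l + q) = \<nu>"
        using q ll mu lookup_toPM[OF idx_diff[OF nu]] by (auto simp: lookup_add Sm_def fun_eq_iff)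
      then show "toPM \<nu> = l + q" by (metis toPM_lookup)
    qed
    then have "Sum_any (\<lambda>q. Poly_Mapping.lookup g q when toPM \<nu> = l + q) = Sum_any (\<lambda>q. if q = toPM (\<lambda>i. \<nu> i - \<mu> i) then Poly_Mapping.lookup g q else 0)"
      by (simp add: when_def)
    also have "\<dots> = Poly_Mapping.lookup g (toPM (\<lambda>i. \<nu> i - \<mu> i))" by simp
    finally show ?thesis using True ll by simp
  next
    case False
    have "toPM \<nu> \<noteq> l + q" for q
    proof
      assume "toPM \<nu> = l + q"
      then have e: "\<nu> = (\<lambda>i. Poly_Mapping.lookup l i + Poly_Mapping.lookup q i)"
        using lookup_toPM[OF nu] by (metis lookup_add ext)
      then have "Poly_Mapping.lookup l \<in> Sm n \<nu>" using nu by (auto simp: Sm_def idx_def)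
      then have "l \<in> A" unfolding A_def by (metis image_eqI toPM_lookup)
      then show False using False by simp
    qed
    then show ?thesis using False by simp
  qed
  have "Poly_Mapping.lookup (f * g) (toPM \<nu>) = Sum_any (\<lambda>l. Poly_Mapping.lookup f l * Sum_any (\<lambda>q. Poly_Mapping.lookup g q when toPM \<nu> = l + q))"
    by (rule lookup_mult)
  also have "\<dots> = Sum_any (\<lambda>l. if l \<in> A then Poly_Mapping.lookup f l * Poly_Mapping.lookup g (toPM (\<lambda>i. \<nu> i - Poly_Mapping.lookup l i)) else 0)"
    unfolding inner by (simp add: if_distrib cong: if_cong)
  also have "\<dots> = (\<Sum>l\<in>A. Poly_Mapping.lookup f l * Poly_Mapping.lookup g (toPM (\<lambda>i. \<nu> i - Poly_Mapping.lookup l i)))"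
    by (rule Sum_any.conditionalize[OF finA, symmetric])
  also have "\<dots> = (\<Sum>\<mu>\<in>Sm n \<nu>. Poly_Mapping.lookup f (toPM \<mu>) * Poly_Mapping.lookup g (toPM (\<lambda>i. \<nu> i - Poly_Mapping.lookup (toPM \<mu>) i)))"
    unfolding A_def
  proof (rule sum.reindex[unfolded comp_def])
    show "inj_on toPM (Sm n \<nu>)" by (auto simp: inj_on_def Sm_def toPM_eq)
  qed
  also have "\<dots> = (\<Sum>\<mu>\<in>Sm n \<nu>. Poly_Mapping.lookup f (toPM \<mu>) * Poly_Mapping.lookup g (toPM (\<lambda>i. \<nu> i - \<mu> i)))"
    by (intro sum.cong) (auto simp: Sm_def lookup_toPM)
  finally show ?thesis .
qed

definition Tr :: "nat \<Rightarrow> (nat \<Rightarrow> nat) \<Rightarrow> ((nat \<Rightarrow> nat) \<Rightarrow> 'a) \<Rightarrow> (nat \<Rightarrow>\<^sub>0 nat) \<Rightarrow>\<^sub>0 'a::comm_semiring_1" where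
  "Tr n N a = (\<Sum>\<gamma>\<in>Sm n N. Poly_Mapping.single (toPM \<gamma>) (a \<gamma>))"

lemma lookup_Tr: "\<kappa> \<in> idx n \<Longrightarrow> Poly_Mapping.lookup (Tr n N a) (toPM \<kappa>) = (if \<kappa> \<in> Sm n N then a \<kappa> else 0)"
proof -
  assume k: "\<kappa> \<in> idx n"
  have "Poly_Mapping.lookup (Tr n N a) (toPM \<kappa>) = (\<Sum>\<gamma>\<in>Sm n N. if \<gamma> = \<kappa> then a \<gamma> else 0)"
    unfolding Tr_def lookup_sum lookup_single
    by (intro sum.cong) (auto simp: when_def Sm_def toPM_eq[OF _ k])
  then show ?thesis by (simp add: finite_Sm)
qed

lemma pow_Tr:
  fixes a :: "(nat \<Rightarrow> nat) \<Rightarrow> 'k::field"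
  assumes \<nu>: "\<nu> \<in> idx n" "\<forall>i. \<nu> i \<le> N i"
  shows "(a [^]\<^bsub>K absv n\<^esub> m) \<nu> = Poly_Mapping.lookup ((Tr n N a) ^ m) (toPM \<nu>)"
  using \<nu>
proof (induction m arbitrary: \<nu>)
  case 0
  have z: "toPM (\<lambda>_. 0) = 0"
    by (rule poly_mapping_eqI) (simp add: lookup_toPM[OF idx_zero])
  have "(toPM \<nu> = 0) = (\<nu> = (\<lambda>_. 0))"
    using toPM_eq[OF 0(1) idx_zero] z by simp
  then show ?case by (simp add: K_pow_0 K_simps lookup_one mon_def when_def)
next
  case (Suc m)
  have "(a [^]\<^bsub>K absv n\<^esub> Suc m) \<nu> = (\<Sum>\<mu>\<in>Sm n \<nu>. (a [^]\<^bsub>K absv n\<^esub> m) \<mu> * a (\<lambda>i. \<nu> i - \<mu> i))"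
    using Suc.prems by (simp add: K_pow_Suc K_simps ps_mult_def Sm_def)
  also have "\<dots> = (\<Sum>\<mu>\<in>Sm n \<nu>. Poly_Mapping.lookup ((Tr n N a) ^ m) (toPM \<mu>) * Poly_Mapping.lookup (Tr n N a) (toPM (\<lambda>i. \<nu> i - \<mu> i)))"
  proof (intro sum.cong refl)
    fix \<mu> assume mu: "\<mu> \<in> Sm n \<nu>"
    have "(a [^]\<^bsub>K absv n\<^esub> m) \<mu> = Poly_Mapping.lookup ((Tr n N a) ^ m) (toPM \<mu>)"
      using mu Suc.prems by (intro Suc.IH) (auto simp: Sm_def intro: le_trans)
    moreover have "Poly_Mapping.lookup (Tr n N a) (toPM (\<lambda>i. \<nu> i - \<mu> i)) = a (\<lambda>i. \<nu> i - \<mu> i)"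
    proof -
      have "\<forall>i. \<nu> i - \<mu> i \<le> N i" using Suc.prems(2) by (meson diff_le_self le_trans)
      then show ?thesis using idx_diff[OF Suc.prems(1)] by (subst lookup_Tr) (auto simp: Sm_def)
    qed
    ultimately show "(a [^]\<^bsub>K absv n\<^esub> m) \<mu> * a (\<lambda>i. \<nu> i - \<mu> i) =
      Poly_Mapping.lookup ((Tr n N a) ^ m) (toPM \<mu>) * Poly_Mapping.lookup (Tr n N a) (toPM (\<lambda>i. \<nu> i - \<mu> i))" by simp
  qed
  also have "\<dots> = Poly_Mapping.lookup ((Tr n N a) ^ m * Tr n N a) (toPM \<nu>)"
    by (rule lookup_mult_idx[OF Suc.prems(1), symmetric])
  finally show ?case unfolding power_Suc2 .
qed

lemma single_pow:
  assumes "\<gamma> \<in> idx n"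
  shows "(Poly_Mapping.single (toPM \<gamma>) (v::'a::comm_semiring_1)) ^ m = Poly_Mapping.single (toPM (\<lambda>i. m * \<gamma> i)) (v ^ m)"
proof (induction m)
  case 0
  have z: "toPM (\<lambda>i. 0 * \<gamma> i) = 0"
    by (rule poly_mapping_eqI) (simp add: lookup_toPM[OF idx_zero])
  show ?case by (simp only: z power_0 single_one)
next
  case (Suc m)
  have "toPM \<gamma> + toPM (\<lambda>i. m * \<gamma> i) = toPM (\<lambda>i. Suc m * \<gamma> i)"
    by (rule poly_mapping_eqI) (simp add: lookup_add lookup_toPM[OF assms] lookup_toPM[OF idx_mult[OF assms]]
         lookup_toPM[OF idx_add[OF assms idx_mult[OF assms]]])
  then show ?case using Suc by (simp only: power_Suc mult_single)
qed

lemma CHAR_pm: "CHAR((nat \<Rightarrow>\<^sub>0 nat) \<Rightarrow>\<^sub>0 'a::comm_semiring_1) = CHAR('a)"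
proof (rule CHAR_eqI)
  show "of_nat CHAR('a) = (0 :: (nat \<Rightarrow>\<^sub>0 nat) \<Rightarrow>\<^sub>0 'a)"
    by (simp only: single_of_nat[symmetric] of_nat_CHAR single_zero)
next
  fix x assume "of_nat x = (0 :: (nat \<Rightarrow>\<^sub>0 nat) \<Rightarrow>\<^sub>0 'a)"
  then have "Poly_Mapping.lookup (of_nat x :: (nat \<Rightarrow>\<^sub>0 nat) \<Rightarrow>\<^sub>0 'a) 0 = 0" by (simp only: lookup_zero)
  then have "of_nat x = (0::'a)" by (simp only: lookup_of_nat simp_thms when_simps(1))
  then show "CHAR('a) dvd x" by (simp add: of_nat_eq_0_iff_char_dvd)
qed

lemma frob_formula:
  fixes a :: "(nat \<Rightarrow> nat) \<Rightarrow> 'k::field"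
  assumes pr: "prime p" and ch: "CHAR('k) = p" and mu: "\<mu> \<in> idx n"
  shows "(a [^]\<^bsub>K absv n\<^esub> p) \<mu> = (if \<forall>i. p dvd \<mu> i then a (\<lambda>i. \<mu> i div p) ^ p else 0)"
proof -
  have "(a [^]\<^bsub>K absv n\<^esub> p) \<mu> = Poly_Mapping.lookup ((Tr n \<mu> a) ^ p) (toPM \<mu>)"
    by (rule pow_Tr[OF mu]) simp
  also have "(Tr n \<mu> a) ^ p = (\<Sum>\<gamma>\<in>Sm n \<mu>. (Poly_Mapping.single (toPM \<gamma>) (a \<gamma>)) ^ p)"
    unfolding Tr_def
  proof (rule freshmans_dream_sum)
    show "prime CHAR((nat \<Rightarrow>\<^sub>0 nat) \<Rightarrow>\<^sub>0 'k)" by (simp only: CHAR_pm ch pr)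
    show "p = CHAR((nat \<Rightarrow>\<^sub>0 nat) \<Rightarrow>\<^sub>0 'k)" by (simp only: CHAR_pm ch)
  qed
  also have "\<dots> = (\<Sum>\<gamma>\<in>Sm n \<mu>. Poly_Mapping.single (toPM (\<lambda>i. p * \<gamma> i)) (a \<gamma> ^ p))"
    by (intro sum.cong) (auto simp: Sm_def single_pow)
  finally have e0: "(a [^]\<^bsub>K absv n\<^esub> p) \<mu> = (\<Sum>\<gamma>\<in>Sm n \<mu>. if toPM (\<lambda>i. p * \<gamma> i) = toPM \<mu> then a \<gamma> ^ p else 0)"
    unfolding lookup_sum lookup_single by (simp add: when_def)
  have te: "(toPM (\<lambda>i. p * \<gamma> i) = toPM \<mu>) = ((\<lambda>i. p * \<gamma> i) = \<mu>)" if "\<gamma> \<in> Sm n \<mu>" for \<gamma>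
    using that toPM_eq[OF idx_mult mu, of \<gamma> p] by (simp add: Sm_def)
  have e: "(a [^]\<^bsub>K absv n\<^esub> p) \<mu> = (\<Sum>\<gamma>\<in>Sm n \<mu>. if (\<lambda>i. p * \<gamma> i) = \<mu> then a \<gamma> ^ p else 0)"
    unfolding e0 by (intro sum.cong refl) (simp add: te)
  have p0: "p > 0" using pr prime_gt_0_nat by blast
  show ?thesis
  proof (cases "\<forall>i. p dvd \<mu> i")
    case True
    define \<gamma>0 where "\<gamma>0 = (\<lambda>i. \<mu> i div p)"
    have g0: "\<gamma>0 \<in> Sm n \<mu>" using mu by (auto simp: \<gamma>0_def Sm_def idx_def)
    have iff: "((\<lambda>i. p * \<gamma> i) = \<mu>) = (\<gamma> = \<gamma>0)" for \<gamma>
      using True p0 by (auto simp: \<gamma>0_def fun_eq_iff) (metis nonzero_mult_div_cancel_left not_gr0)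
    have "(a [^]\<^bsub>K absv n\<^esub> p) \<mu> = (\<Sum>\<gamma>\<in>Sm n \<mu>. if \<gamma> = \<gamma>0 then a \<gamma> ^ p else 0)"
      unfolding e iff ..
    also have "\<dots> = a \<gamma>0 ^ p" using g0 by (simp only: sum.delta[OF finite_Sm] if_True)
    finally have X: "(a [^]\<^bsub>K absv n\<^esub> p) \<mu> = a \<gamma>0 ^ p" .
    show ?thesis by (subst if_P[OF True]) (simp only: X \<gamma>0_def)
  next
    case False
    then have "(\<lambda>i. p * \<gamma> i) \<noteq> \<mu>" for \<gamma> by auto
    then have "(a [^]\<^bsub>K absv n\<^esub> p) \<mu> = 0" unfolding e by (simp only: if_False sum.neutral_const)
    then show ?thesis by (subst if_not_P[OF False])
  qed
qed

lemma rpl_sum: "root_p_linear p h \<Longrightarrow> h (\<Sum>j\<in>A. f j) = (\<Sum>j\<in>A. h (f j))"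
proof (induction A rule: infinite_finite_induct)
  case (infinite A) then show ?case using rpl_zero by simp
next
  case empty then show ?case using rpl_zero by simp
next
  case (insert x F) then show ?case by (simp add: root_p_linear_def)
qed

lemma pow_powr_inv: "0 \<le> x \<Longrightarrow> 0 < p \<Longrightarrow> ((x::real) ^ p) powr (1 / real p) = x"
  by (cases "x = 0") (auto simp: powr_realpow[symmetric] powr_powr)

context fixes absv :: "'k::field \<Rightarrow> real" assumes na: "nonarch_abs absv"
begin

lemma cont_bound:
  assumes nt: "nontrivial_value_group absv" and rpl: "root_p_linear p g"
    and ct: "root_p_continuous absv p g" and p0: "0 < p"
  shows "\<exists>Cb>0. \<forall>y. absv (g y) \<le> Cb * max 1 (absv y powr (1 / real p))"
proof -
  obtain \<pi> where pi: "absv \<pi> > 1" using big_elem[OF na nt] by blast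
  define \<rho> where "\<rho> = absv \<pi>"
  have \<rho>1: "\<rho> > 1" using pi by (simp add: \<rho>_def)
  obtain d where d: "d > 0" and hd: "\<forall>y. absv (y - 0) powr (1 / real p) < d \<longrightarrow> absv (g y - g 0) < 1"
    using ct unfolding root_p_continuous_def by (meson zero_less_one)
  have hd': "absv (g y) < 1" if "absv y powr (1 / real p) < d" for y
    using hd that rpl_zero[OF rpl] by simp
  have Pk: "absv (g y) < \<rho> ^ k" if "absv y powr (1 / real p) < d * \<rho> ^ k" for y k
  proof -
    define t where "t = inverse \<pi> ^ k"
    have at: "absv t = inverse (\<rho> ^ k)" by (simp add: t_def av_power[OF na] av_inverse[OF na] \<rho>_def power_inverse)
    have "absv (t ^ p * y) powr (1 / real p) = (absv t ^ p) powr (1 / real p) * absv y powr (1 / real p)"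
      by (simp add: av_mult[OF na] av_power[OF na] powr_mult av_nonneg[OF na])
    also have "(absv t ^ p) powr (1 / real p) = absv t"
      using p0 av_nonneg[OF na, of t] by (rule pow_powr_inv[rotated])
    finally have "absv (t ^ p * y) powr (1 / real p) = inverse (\<rho> ^ k) * absv y powr (1 / real p)"
      using at by simp
    also have "\<dots> < inverse (\<rho> ^ k) * (d * \<rho> ^ k)" using that \<rho>1 by (intro mult_strict_left_mono) auto
    also have "\<dots> = d" using \<rho>1 by simp
    finally have "absv (g (t ^ p * y)) < 1" by (rule hd')
    then have "inverse (\<rho> ^ k) * absv (g y) < 1" using rpl at
      by (simp add: root_p_linear_def av_mult[OF na])
    then show ?thesis using \<rho>1 by (simp add: field_simps)
  qed
  define Cb where "Cb = max 1 (\<rho> / d)"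
  have "absv (g y) \<le> Cb * max 1 (absv y powr (1 / real p))" for y
  proof -
    define s where "s = absv y powr (1 / real p)"
    have s0: "s \<ge> 0" by (simp add: s_def)
    obtain k where k: "s / d < \<rho> ^ k" using real_arch_pow[OF \<rho>1] by blast
    define k0 where "k0 = (LEAST k. s / d < \<rho> ^ k)"
    have k0: "s / d < \<rho> ^ k0" unfolding k0_def using k by (rule LeastI)
    have "absv (g y) < \<rho> ^ k0" using Pk[of y k0] k0 d by (simp add: s_def field_simps)
    moreover have "\<rho> ^ k0 \<le> Cb * max 1 s"
    proof (cases k0)
      case 0
      have "1 * 1 \<le> Cb * max 1 s" by (rule mult_mono) (auto simp: Cb_def)
      then show ?thesis using 0 by simp
    next
      case (Suc j)
      then have "\<not> s / d < \<rho> ^ j" unfolding k0_def by (metis Suc lessI not_less_Least k0_def)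
      then have "\<rho> ^ j \<le> s / d" by simp
      then have "\<rho> * \<rho> ^ j \<le> \<rho> * (s / d)" using \<rho>1 by (intro mult_left_mono) auto
      then have "\<rho> ^ k0 \<le> \<rho> * (s / d)" using Suc by simp
      also have "\<dots> = (\<rho> / d) * s" by simp
      also have "\<dots> \<le> Cb * max 1 s" using s0 d \<rho>1 by (intro mult_mono) (auto simp: Cb_def)
      finally show ?thesis .
    qed
    ultimately show ?thesis by (simp add: s_def)
  qed
  moreover have "Cb > 0" by (simp add: Cb_def)
  ultimately show ?thesis by blast
qed

end

lemma max_mult_le: "0 \<le> a \<Longrightarrow> 0 \<le> b \<Longrightarrow> max 1 (a * b) \<le> max 1 a * max (1::real) b"
  by (simp add: max_def mult_mono) (smt (verit) mult_le_cancel_left1 mult_le_cancel_right1 mult_nonneg_nonneg)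

context fixes absv :: "'k::field \<Rightarrow> real" assumes na: "nonarch_abs absv"
begin

lemma vi_split:
  assumes nt: "nontrivial_value_group absv" and pr: "prime p" and ch: "CHAR('k) = p"
    and rpl: "root_p_linear p g" and ct: "root_p_continuous absv p g" and gx: "g x0 \<noteq> 0"
  shows "frobenius_split (K absv n) p"
proof -
  have p0: "0 < p" using pr prime_gt_0_nat by blast
  obtain Cb where Cb: "Cb > 0" "\<forall>y. absv (g y) \<le> Cb * max 1 (absv y powr (1 / real p))"
    using cont_bound[OF na nt rpl ct p0] by blast
  define h where "h y = g (x0 * y) / g x0" for y
  have hadd: "h (x + y) = h x + h y" for x y
    using rpl by (simp add: h_def root_p_linear_def distrib_left add_divide_distrib)
  have hsc: "h (c ^ p * y) = c * h y" for c y
  proof -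
    have "g (x0 * (c ^ p * y)) = g (c ^ p * (x0 * y))" by (simp add: ac_simps)
    then show ?thesis using rpl by (simp add: h_def root_p_linear_def)
  qed
  have rplh: "root_p_linear p h" using hadd hsc by (simp add: root_p_linear_def)
  have h1: "h 1 = 1" using gx by (simp add: h_def)
  define Ch where "Ch = Cb * max 1 (absv x0 powr (1 / real p)) / absv (g x0)"
  have gx0: "absv (g x0) > 0" using gx av_zero_iff[OF na] av_nonneg[OF na] by (metis less_eq_real_def)
  have Ch0: "Ch > 0" unfolding Ch_def using Cb gx0 by (intro divide_pos_pos mult_pos_pos) auto
  have hb: "absv (h y) \<le> Ch * max 1 (absv y powr (1 / real p))" for y
  proof -
    have "absv (h y) = absv (g (x0 * y)) / absv (g x0)"
      by (simp add: h_def divide_inverse av_mult[OF na] av_inverse[OF na])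
    also have "\<dots> \<le> Cb * max 1 (absv (x0 * y) powr (1 / real p)) / absv (g x0)"
      using Cb(2) gx0 by (intro divide_right_mono) auto
    also have "absv (x0 * y) powr (1 / real p) = absv x0 powr (1 / real p) * absv y powr (1 / real p)"
      by (simp add: av_mult[OF na] powr_mult av_nonneg[OF na])
    also have "Cb * max 1 (absv x0 powr (1 / real p) * absv y powr (1 / real p)) / absv (g x0)
        \<le> Cb * (max 1 (absv x0 powr (1 / real p)) * max 1 (absv y powr (1 / real p))) / absv (g x0)"
      using Cb gx0 by (intro divide_right_mono mult_left_mono max_mult_le) auto
    also have "\<dots> = Ch * max 1 (absv y powr (1 / real p))" by (simp add: Ch_def)
    finally show ?thesis .
  qed
  define \<phi> where "\<phi> x = (\<lambda>\<nu>. if \<nu> \<in> idx n then h (x (\<lambda>i. p * \<nu> i)) else 0)" for x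
  have phi_in: "\<phi> x \<in> C absv n" if x: "x \<in> C absv n" for x
  proof -
    obtain r M where r: "\<forall>i<n. r i > 0" "M > 0" "\<forall>\<nu>\<in>idx n. absv (x \<nu>) * (\<Prod>i<n. r i ^ \<nu> i) \<le> M"
      using C_bound[OF na x] by blast
    define r' where "r' i = min (r i) 1" for i
    have r'0: "\<forall>i<n. r' i > 0" using r by (simp add: r'_def)
    define Mp where "Mp = M powr (1 / real p)"
    have Mp0: "Mp > 0" using r by (simp add: Mp_def)
    have bnd: "absv (\<phi> x \<nu>) * (\<Prod>i<n. r' i ^ \<nu> i) \<le> Ch * max 1 Mp" if nu: "\<nu> \<in> idx n" for \<nu>
    proof -
      define R where "R = (\<Prod>i<n. r i ^ \<nu> i)"
      define R' where "R' = (\<Prod>i<n. r' i ^ \<nu> i)"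
      have R0: "R > 0" using r unfolding R_def by (intro prod_pos) auto
      have R'0: "R' > 0" using r'0 unfolding R'_def by (intro prod_pos) auto
      have R'R: "R' \<le> R" unfolding R'_def R_def using r'0
        by (intro prod_mono) (auto simp: r'_def intro!: power_mono)
      have R'1: "R' \<le> 1" unfolding R'_def using r'0
        by (intro prod_le_1) (auto simp: r'_def intro!: power_le_one)
      have RP: "(\<Prod>i<n. r i ^ (p * \<nu> i)) = R ^ p"
        unfolding R_def prod_power_distrib by (intro prod.cong refl) (simp add: power_mult[symmetric] mult.commute)
      have "absv (x (\<lambda>i. p * \<nu> i)) * (\<Prod>i<n. r i ^ (p * \<nu> i)) \<le> M"
        using r(3) idx_mult[OF nu] by auto
      then have "absv (x (\<lambda>i. p * \<nu> i)) * R ^ p \<le> M" unfolding RP .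
      then have xb: "absv (x (\<lambda>i. p * \<nu> i)) \<le> M / R ^ p" using R0 by (simp add: field_simps)
      have "absv (x (\<lambda>i. p * \<nu> i)) powr (1 / real p) \<le> (M / R ^ p) powr (1 / real p)"
        using xb av_nonneg[OF na] by (intro powr_mono2) auto
      also have "\<dots> = Mp / R"
        using R0 r(2) p0 by (simp add: powr_divide Mp_def pow_powr_inv less_imp_le)
      finally have sb: "absv (x (\<lambda>i. p * \<nu> i)) powr (1 / real p) \<le> Mp / R" .
      have "absv (\<phi> x \<nu>) * R' \<le> Ch * max 1 (Mp / R) * R'"
        using nu hb[of "x (\<lambda>i. p * \<nu> i)"] sb Ch0 R'0
        by (simp add: \<phi>_def) (smt (verit) max.mono mult_left_mono mult_right_mono)
      also have "\<dots> = Ch * max R' (Mp * (R' / R))" using R'0 by (simp add: max_mult_distrib_right)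
      also have "\<dots> \<le> Ch * max 1 Mp"
      proof -
        have "R' / R \<le> 1" using R'R R0 by simp
        then have "Mp * (R' / R) \<le> Mp * 1" using Mp0 by (intro mult_left_mono) auto
        then show ?thesis using R'1 Ch0 by (intro mult_left_mono) auto
      qed
      finally show ?thesis by (simp add: R'_def)
    qed
    have "\<forall>\<nu>. \<nu> \<notin> idx n \<longrightarrow> \<phi> x \<nu> = 0" by (simp add: \<phi>_def)
    then show ?thesis using bnd r'0 Ch0 unfolding conv_series_def
      by (intro CollectI conjI) (auto intro!: exI[of _ r'] exI[of _ "Ch * max 1 Mp"])
  qed
  have phi_add: "\<phi> (\<lambda>\<nu>. x \<nu> + y \<nu>) = (\<lambda>\<nu>. \<phi> x \<nu> + \<phi> y \<nu>)" for x y
    by (auto simp: \<phi>_def hadd fun_eq_iff)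
  have phi_frob: "\<phi> (ps_mult n (r [^]\<^bsub>K absv n\<^esub> p) x) = ps_mult n r (\<phi> x)" for r x
  proof
    fix \<nu>
    show "\<phi> (ps_mult n (r [^]\<^bsub>K absv n\<^esub> p) x) \<nu> = ps_mult n r (\<phi> x) \<nu>"
    proof (cases "\<nu> \<in> idx n")
      case False then show ?thesis by (simp add: \<phi>_def ps_mult_def)
    next
      case nu: True
      define rp where "rp = r [^]\<^bsub>K absv n\<^esub> p"
      define pn where "pn = (\<lambda>i. p * \<nu> i)"
      have pnidx: "pn \<in> idx n" using idx_mult[OF nu] by (simp add: pn_def)
      define F where "F \<mu> = rp \<mu> * x (\<lambda>i. pn i - \<mu> i)" for \<mu>
      have rpf: "rp \<mu> = (if \<forall>i. p dvd \<mu> i then r (\<lambda>i. \<mu> i div p) ^ p else 0)" if "\<mu> \<in> idx n" for \<mu>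
        unfolding rp_def by (rule frob_formula[OF pr ch that])
      have injm: "inj_on (\<lambda>\<gamma> i. p * \<gamma> i) (Sm n \<nu>)"
        using p0 by (auto simp: inj_on_def fun_eq_iff)
      have "ps_mult n rp x pn = (\<Sum>\<mu>\<in>Sm n pn. F \<mu>)"
        using pnidx by (simp add: ps_mult_def F_def Sm_def)
      also have "\<dots> = (\<Sum>\<mu>\<in>(\<lambda>\<gamma> i. p * \<gamma> i) ` Sm n \<nu>. F \<mu>)"
      proof (rule sum.mono_neutral_right[OF finite_Sm])
        show "(\<lambda>\<gamma> i. p * \<gamma> i) ` Sm n \<nu> \<subseteq> Sm n pn"
          by (auto simp: Sm_def pn_def idx_def)
        show "\<forall>\<mu>\<in>Sm n pn - (\<lambda>\<gamma> i. p * \<gamma> i) ` Sm n \<nu>. F \<mu> = 0"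
        proof
          fix \<mu> assume m: "\<mu> \<in> Sm n pn - (\<lambda>\<gamma> i. p * \<gamma> i) ` Sm n \<nu>"
          have midx: "\<mu> \<in> idx n" using m by (simp add: Sm_def)
          have "\<not> (\<forall>i. p dvd \<mu> i)"
          proof
            assume dv: "\<forall>i. p dvd \<mu> i"
            define \<gamma> where "\<gamma> = (\<lambda>i. \<mu> i div p)"
            have "\<mu> = (\<lambda>i. p * \<gamma> i)" using dv by (auto simp: \<gamma>_def fun_eq_iff)
            moreover have "\<gamma> \<in> Sm n \<nu>"
            proof -
              have "\<mu> i \<le> p * \<nu> i" for i using m by (simp add: Sm_def pn_def)
              then have "\<gamma> i \<le> \<nu> i" for i using p0 div_le_mono[of "\<mu> i" "p * \<nu> i" p] by (simp add: \<gamma>_def)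
              moreover have "\<gamma> \<in> idx n" using midx by (simp add: \<gamma>_def idx_def)
              ultimately show ?thesis by (simp add: Sm_def)
            qed
            ultimately show False using m by blast
          qed
          then show "F \<mu> = 0" by (auto simp: F_def rpf[OF midx])
        qed
      qed
      also have "\<dots> = (\<Sum>\<gamma>\<in>Sm n \<nu>. F (\<lambda>i. p * \<gamma> i))"
        by (rule sum.reindex[OF injm, unfolded comp_def])
      also have "\<dots> = (\<Sum>\<gamma>\<in>Sm n \<nu>. r \<gamma> ^ p * x (\<lambda>i. p * (\<nu> i - \<gamma> i)))"
      proof (rule sum.cong[OF refl])
        fix \<gamma> assume g: "\<gamma> \<in> Sm n \<nu>"
        have gidx: "(\<lambda>i. p * \<gamma> i) \<in> idx n" using g idx_mult by (auto simp: Sm_def)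
        have "rp (\<lambda>i. p * \<gamma> i) = r \<gamma> ^ p" using p0 by (simp add: rpf[OF gidx])
        moreover have "(\<lambda>i. pn i - p * \<gamma> i) = (\<lambda>i. p * (\<nu> i - \<gamma> i))"
          by (simp add: pn_def diff_mult_distrib2)
        ultimately show "F (\<lambda>i. p * \<gamma> i) = r \<gamma> ^ p * x (\<lambda>i. p * (\<nu> i - \<gamma> i))"
          by (simp add: F_def)
      qed
      finally have e1: "ps_mult n rp x pn = (\<Sum>\<gamma>\<in>Sm n \<nu>. r \<gamma> ^ p * x (\<lambda>i. p * (\<nu> i - \<gamma> i)))" .
      have "\<phi> (ps_mult n rp x) \<nu> = h (ps_mult n rp x pn)" using nu by (simp add: \<phi>_def pn_def)
      also have "\<dots> = (\<Sum>\<gamma>\<in>Sm n \<nu>. r \<gamma> * h (x (\<lambda>i. p * (\<nu> i - \<gamma> i))))"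
        unfolding e1 rpl_sum[OF rplh] by (simp add: hsc)
      also have "\<dots> = ps_mult n r (\<phi> x) \<nu>"
        using nu by (auto simp: ps_mult_def Sm_def \<phi>_def idx_diff intro!: sum.cong)
      finally show ?thesis by (simp add: rp_def)
    qed
  qed
  have phi_one: "\<phi> (mon 1 (\<lambda>_. 0)) = mon 1 (\<lambda>_. 0)"
  proof
    fix \<nu> :: "nat \<Rightarrow> nat"
    have "((\<lambda>i. p * \<nu> i) = (\<lambda>_. 0)) = (\<nu> = (\<lambda>_. 0))" using p0 by (auto simp: fun_eq_iff)
    then show "\<phi> (mon 1 (\<lambda>_. 0)) \<nu> = mon 1 (\<lambda>_. 0) \<nu>"
      using h1 rpl_zero[OF rplh] idx_zero by (auto simp: \<phi>_def mon_def)
  qed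
  have "pinv_linear (K absv n) p \<phi>"
    unfolding pinv_linear_def K_simps using phi_in phi_add phi_frob by auto
  then show ?thesis unfolding frobenius_split_def K_simps using phi_one by blast
qed

end

theorem mainTheorem5:
  fixes absv :: "'k::field \<Rightarrow> real" and p :: nat
  assumes "nonarch_abs absv" and "abs_complete absv" and "nontrivial_value_group absv"
    and "prime p" and "CHAR('k) = p"
  defines "i \<equiv> (\<forall>n>0. frobenius_split (K absv n) p)"
    and "ii \<equiv> (\<forall>n>0. has_nonzero_pinv_linear (K absv n) p)"
    and "iii \<equiv> (\<exists>n>0. has_nonzero_pinv_linear (K absv n) p)"
    and "iv \<equiv> has_nonzero_pinv_linear (K absv 1) p"
    and "v \<equiv> frobenius_split (K absv 1) p"
    and "vi \<equiv> (\<exists>g. root_p_linear p g \<and> root_p_continuous absv p g \<and> (\<exists>x. g x \<noteq> 0))"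
  shows "(i \<longleftrightarrow> ii) \<and> (ii \<longleftrightarrow> iii) \<and> (iii \<longleftrightarrow> iv) \<and> (iv \<longleftrightarrow> v) \<and> (v \<longleftrightarrow> vi)"
proof -
  note na = assms(1) and nt = assms(3) and pr = assms(4) and ch = assms(5)
  have p0: "0 < p" using pr prime_gt_0_nat by blast
  have E: "frobenius_split (K absv n) p" if vi for n
  proof -
    obtain g x where "root_p_linear p g" "root_p_continuous absv p g" "g x \<noteq> 0"
      using \<open>vi\<close> unfolding vi_def by blast
    then show ?thesis using vi_split[OF na nt pr ch] by blast
  qed
  have F: "vi" if "0 < n" "has_nonzero_pinv_linear (K absv n) p" for n
    unfolding vi_def by (rule iii_vi[OF na nt p0 that])
  have G: "has_nonzero_pinv_linear (K absv n) p" if fs: "frobenius_split (K absv n) p" for n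
  proof -
    obtain \<phi> where pl: "pinv_linear (K absv n) p \<phi>" and o: "\<phi> (mon 1 (\<lambda>_. 0)) = mon 1 (\<lambda>_. 0)"
      using fs unfolding frobenius_split_def K_simps(3) by blast
    have m: "mon 1 (\<lambda>_. 0) \<in> conv_series absv n" by (rule mon_in[OF na idx_zero])
    have "\<phi> (mon 1 (\<lambda>_. 0)) \<noteq> (\<lambda>_. 0)"
      unfolding o by (metis mon_def one_neq_zero)
    then show ?thesis unfolding has_nonzero_pinv_linear_def K_simps using pl m by blast
  qed
  have "i = vi" unfolding i_def using E F G by blast
  moreover have "ii = vi" unfolding ii_def using E F G by (meson zero_less_one)
  moreover have "iii = vi" unfolding iii_def using E F G by (meson zero_less_one)
  moreover have "iv = vi" unfolding iv_def using E F G by (meson zero_less_one)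
  moreover have "v = vi" unfolding v_def using E F G by (meson zero_less_one)
  ultimately show ?thesis by simp
qed

end
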